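(* Let $(X,T)$ be a dynamical system (a compact metrizable space $X$ with a homeomorphism $T$) which satisfies partial specification with periods $\mathcal{P}$ for some $\mathcal{P}\subseteq\mathbb{N}$ with bounded gaps. Then $(X,T)$ satisfies partial shadowing.
   Context: Fix a compatible metric $d_X$ (both properties are independent of this choice). Partial specification with periods $\mathcal{P}$: for every $\varepsilon>0$ there exist $N,M\in\mathbb{N}$ such that for every $M$-spaced specification $\{(x_i;a_i,b_i)\}_{i=1}^r$ (i.e. $x_i\in X$, integers $0\le a_1<b_1<\cdots<a_r<b_r$ with $a_{i+1}-b_i\ge M$) and every $n\in\mathcal{P}$ with $n\ge\max\{N,(1+\varepsilon)b_r\}$ there is $y\in X$ with $T^ny=y$ such that $|\{a_i\le m<b_i:d_X(T^mx_i,T^my)<\varepsilon\}|>(1-\varepsilon)(b_i-a_i)$ for every $i$. A finite sequence $(x_n)_{n=1}^N$ is $\varepsilon$-partially traced by $y$ if $|\{1\le n\le N: d_X(x_n,T^ny)<\varepsilon\}|>(1-\varepsilon)N$. It is a $\delta$-partial pseudo-orbit if $N=1$, or $N\ge2$ and $|\{1\le n\le N-1: d_X(Tx_n,x_{n+1})<\delta\}|>(1-\delta)(N-1)$. $(X,T)$ satisfies partial shadowing if for every $\varepsilon>0$ there exists $\delta>0$ such that every $\delta$-partial pseudo-orbit is $\varepsilon$-partially traced by some point of $X$. *)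

theory Defs
  imports "HOL-Analysis.Analysis"
begin

definition dyn_sys :: "'a::metric_space set \<Rightarrow> ('a \<Rightarrow> 'a) \<Rightarrow> bool" where
  "dyn_sys X T \<longleftrightarrow> compact X \<and> homeomorphism X X T (inv_into X T) \<and> T ` X = X"

definition bounded_gaps :: "nat set \<Rightarrow> bool" where
  "bounded_gaps P \<longleftrightarrow> (\<exists>K. \<forall>n. \<exists>p\<in>P. n \<le> p \<and> p < n + K)"

definition partial_specification ::
  "'a::metric_space set \<Rightarrow> ('a \<Rightarrow> 'a) \<Rightarrow> nat set \<Rightarrow> bool" where
  "partial_specification X T P \<longleftrightarrow>
    (\<forall>\<epsilon>>0. \<exists>N M::nat.
      \<forall>(r::nat) (x::nat \<Rightarrow> 'a) (a::nat \<Rightarrow> nat) (b::nat \<Rightarrow> nat) (n::nat).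
        r \<ge> 1 \<and> (\<forall>i<r. x i \<in> X) \<and> (\<forall>i<r. a i < b i)
        \<and> (\<forall>i. Suc i < r \<longrightarrow> b i < a (Suc i) \<and> a (Suc i) - b i \<ge> M)
        \<and> n \<in> P \<and> n \<ge> N \<and> real n \<ge> (1 + \<epsilon>) * real (b (r - 1))
        \<longrightarrow> (\<exists>y\<in>X. (T ^^ n) y = y \<and>
              (\<forall>i<r. real (card {m. a i \<le> m \<and> m < b i \<and>
                                    dist ((T ^^ m) (x i)) ((T ^^ m) y) < \<epsilon>})
                     > (1 - \<epsilon>) * real (b i - a i))))"

definition partial_pseudo_orbit ::
  "('a::metric_space \<Rightarrow> 'a) \<Rightarrow> real \<Rightarrow> (nat \<Rightarrow> 'a) \<Rightarrow> nat \<Rightarrow> bool" where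
  "partial_pseudo_orbit T \<delta> x N \<longleftrightarrow>
     N = 1 \<or> (N \<ge> 2 \<and> real (card {n. 1 \<le> n \<and> n \<le> N - 1 \<and> dist (T (x n)) (x (Suc n)) < \<delta>})
                        > (1 - \<delta>) * real (N - 1))"

definition partially_traced ::
  "('a::metric_space \<Rightarrow> 'a) \<Rightarrow> real \<Rightarrow> (nat \<Rightarrow> 'a) \<Rightarrow> nat \<Rightarrow> 'a \<Rightarrow> bool" where
  "partially_traced T \<epsilon> x N y \<longleftrightarrow>
     real (card {n. 1 \<le> n \<and> n \<le> N \<and> dist (x n) ((T ^^ n) y) < \<epsilon>}) > (1 - \<epsilon>) * real N"

definition partial_shadowing :: "'a::metric_space set \<Rightarrow> ('a \<Rightarrow> 'a) \<Rightarrow> bool" where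
  "partial_shadowing X T \<longleftrightarrow>
    (\<forall>\<epsilon>>0. \<exists>\<delta>>0. \<forall>(N::nat) (x::nat \<Rightarrow> 'a).
       N \<ge> 1 \<and> (\<forall>n\<in>{1..N}. x n \<in> X) \<and> partial_pseudo_orbit T \<delta> x N
       \<longrightarrow> (\<exists>y\<in>X. partially_traced T \<epsilon> x N y))"

end

theory Submission
  imports Defs
begin

lemma funpow_in: "x \<in> X \<Longrightarrow> T ` X \<subseteq> X \<Longrightarrow> (T ^^ k) x \<in> X"
  by (induction k) auto

lemma funpow_pre: "T ` X = X \<Longrightarrow> y \<in> X \<Longrightarrow> \<exists>x\<in>X. (T ^^ k) x = y"
proof (induction k arbitrary: y)
  case 0 then show ?case by auto
next
  case (Suc k)
  obtain w where "w \<in> X" "T w = y" using Suc.prems by (metis imageE)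
  then obtain x where "x \<in> X" "(T ^^ k) x = w" using Suc.IH Suc.prems(1) by blast
  have "(T ^^ Suc k) x = y" using \<open>(T ^^ k) x = w\<close> \<open>T w = y\<close> by simp
  then show ?case using \<open>x \<in> X\<close> by blast
qed

lemma chain:
  fixes T :: "'a::metric_space \<Rightarrow> 'a"
  assumes uc: "uniformly_continuous_on X T" and TX: "T ` X \<subseteq> X"
  shows "\<eta> > 0 \<Longrightarrow> \<exists>\<delta>>0. \<forall>z k. k \<le> L \<longrightarrow> (\<forall>j\<le>k. z j \<in> X) \<longrightarrow>
     (\<forall>j<k. dist (T (z j)) (z (Suc j)) < \<delta>) \<longrightarrow> dist ((T ^^ k) (z 0)) (z k) < \<eta>"
proof (induction L arbitrary: \<eta>)
  case 0
  then show ?case by (intro exI[of _ 1]) auto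
next
  case (Suc L)
  obtain \<rho> where rho: "\<rho> > 0" "\<And>u v. u \<in> X \<Longrightarrow> v \<in> X \<Longrightarrow> dist u v < \<rho> \<Longrightarrow> dist (T u) (T v) < \<eta>/2"
    using uc Suc.prems unfolding uniformly_continuous_on_def
    by (metis dist_commute half_gt_zero)
  obtain d where d: "d > 0" "\<forall>z k. k \<le> L \<longrightarrow> (\<forall>j\<le>k. z j \<in> X) \<longrightarrow>
     (\<forall>j<k. dist (T (z j)) (z (Suc j)) < d) \<longrightarrow> dist ((T ^^ k) (z 0)) (z k) < min \<rho> \<eta>"
    using Suc.IH[of "min \<rho> \<eta>"] rho Suc.prems by auto
  show ?case
  proof (intro exI[of _ "min d (\<eta>/2)"] conjI allI impI)
    show "min d (\<eta>/2) > 0" using d Suc.prems by auto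
    fix z k assume k: "k \<le> Suc L" and zX: "\<forall>j\<le>k. z j \<in> X"
      and st: "\<forall>j<k. dist (T (z j)) (z (Suc j)) < min d (\<eta> / 2)"
    show "dist ((T ^^ k) (z 0)) (z k) < \<eta>"
    proof (cases "k \<le> L")
      case True
      have "\<forall>j<k. dist (T (z j)) (z (Suc j)) < d" using st by simp
      then have "dist ((T ^^ k) (z 0)) (z k) < min \<rho> \<eta>" using d(2) True zX by blast
      then show ?thesis by simp
    next
      case False
      then have kk: "k = Suc L" using k by auto
      have "\<forall>j<L. dist (T (z j)) (z (Suc j)) < d" using st kk by simp
      moreover have "\<forall>j\<le>L. z j \<in> X" using zX kk by simp
      ultimately have "dist ((T ^^ L) (z 0)) (z L) < min \<rho> \<eta>" using d(2) by blast
      then have a: "dist ((T ^^ L) (z 0)) (z L) < \<rho>" by simp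
      have inX: "(T ^^ L) (z 0) \<in> X" "z L \<in> X" using zX kk funpow_in[OF _ TX] by auto
      have b: "dist (T ((T ^^ L) (z 0))) (T (z L)) < \<eta>/2" using rho(2)[OF inX a] .
      have c: "dist (T (z L)) (z (Suc L)) < \<eta>/2" using st kk by auto
      have "dist ((T ^^ k) (z 0)) (z k) \<le> dist (T ((T ^^ L) (z 0))) (T (z L)) + dist (T (z L)) (z (Suc L))"
        using kk dist_triangle by simp
      then show ?thesis using b c by linarith
    qed
  qed
qed

lemma arith_final:
  fixes C cG J cB N L M' \<delta> \<eta> e :: real
  assumes C: "C \<ge> cG * ((1 - \<eta>) * L)" and cG: "cG \<ge> J - cB" and cB: "cB \<le> \<delta> * N"
    and dL: "\<delta> * L \<le> \<eta>" and NJ: "N < (J + 1) * (L + M')" and etaL: "\<eta> * L \<ge> M'"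
    and eN: "e * N > 8 * L" and eta: "\<eta> = e / 4" and e: "0 < e" "e \<le> 1/2" and L: "L \<ge> 1"
    and M: "M' \<ge> 0" and J: "J \<ge> 0" and cBn: "cB \<ge> 0" and d: "\<delta> \<ge> 0" and NB: "N \<ge> L + M'" and Nn: "N \<ge> 0"
  shows "C > (1 - e) * N"
proof -
  have p: "(1 - \<eta>) * L \<ge> 0" using eta e L by simp
  have s1: "cG * ((1 - \<eta>) * L) \<ge> (J - cB) * ((1 - \<eta>) * L)"
    using mult_right_mono[OF cG p] .
  have "(1 - \<eta>) * L \<le> L" using eta e L by (simp add: algebra_simps)
  then have "cB * ((1 - \<eta>) * L) \<le> cB * L"
    using mult_left_mono cBn by blast
  also have "\<dots> \<le> (\<delta> * N) * L" using mult_right_mono[OF cB] L by simp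
  also have "\<dots> = (\<delta> * L) * N" by simp
  also have "\<dots> \<le> \<eta> * N" using mult_right_mono[OF dL Nn] by simp
  finally have s2: "cB * ((1 - \<eta>) * L) \<le> \<eta> * N" .
  have "\<eta> * M' \<ge> 0" using M eta e by simp
  moreover have "(1 - \<eta>) * (L + M') = L + M' - \<eta> * L - \<eta> * M'" by (simp add: algebra_simps)
  ultimately have LB: "L \<ge> (1 - \<eta>) * (L + M')" using etaL by linarith
  have JL: "J * L \<ge> (1 - \<eta>) * (J * (L + M'))"
    using mult_left_mono[OF LB J] by (simp add: algebra_simps)
  have JB: "J * (L + M') \<ge> N - (L + M')" using NJ by (simp add: algebra_simps)
  have q: "(1 - \<eta>) \<ge> 0" using eta e by simp
  have "(1 - \<eta>) * (J * L) \<ge> (1 - \<eta>) * ((1 - \<eta>) * (J * (L + M')))"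
    using mult_left_mono[OF JL q] .
  also have "(1 - \<eta>) * ((1 - \<eta>) * (J * (L + M'))) \<ge> (1 - \<eta>) * ((1 - \<eta>) * (N - (L + M')))"
    using mult_left_mono[OF mult_left_mono[OF JB q] q] .
  also have "(1 - \<eta>) * ((1 - \<eta>) * (N - (L + M'))) = (1 - \<eta>)^2 * (N - (L + M'))"
    by (simp add: power2_eq_square)
  also have "(1 - \<eta>)^2 * (N - (L + M')) \<ge> (1 - 2*\<eta>) * (N - (L + M'))"
    using NB by (intro mult_right_mono) (auto simp: power2_eq_square algebra_simps)
  finally have s3: "(1 - \<eta>) * (J * L) \<ge> (1 - 2*\<eta>) * (N - (L + M'))" .
  have s4: "(1 - 2*\<eta>) * (N - (L + M')) \<ge> (1 - 2*\<eta>) * N - 2 * L"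
  proof -
    have "\<eta> * L \<le> 1 * L" using eta e L by (intro mult_right_mono) auto
    then have ml: "M' \<le> L" using etaL by simp
    have "\<eta> * (L + M') \<ge> 0" using eta e M L by simp
    moreover have "(1 - 2*\<eta>) * (L + M') = L + M' - 2 * (\<eta> * (L + M'))" by (simp add: algebra_simps)
    ultimately have "(1 - 2*\<eta>) * (L + M') \<le> L + M'" by linarith
    with ml show ?thesis by (simp add: algebra_simps)
  qed
  have "C \<ge> (J - cB) * ((1 - \<eta>) * L)" using C s1 by linarith
  also have "(J - cB) * ((1 - \<eta>) * L) = (1 - \<eta>) * (J * L) - cB * ((1 - \<eta>) * L)"
    by (simp add: algebra_simps)
  finally have "C \<ge> (1 - 2*\<eta>) * N - 2 * L - \<eta> * N" using s2 s3 s4 by linarith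
  then show ?thesis using eN eta by (simp add: algebra_simps)
qed


theorem lemma4p7:
  fixes X :: "'a::metric_space set" and T :: "'a \<Rightarrow> 'a" and P :: "nat set"
  assumes "dyn_sys X T"
    and "bounded_gaps P"
    and "partial_specification X T P"
  shows "partial_shadowing X T"
proof -
  have cpt: "compact X" and hom: "homeomorphism X X T (inv_into X T)" and surjT: "T ` X = X"
    using assms(1) unfolding dyn_sys_def by auto
  have contT: "continuous_on X T" using hom homeomorphism_def by blast
  have uc: "uniformly_continuous_on X T" using compact_uniformly_continuous[OF contT cpt] .
  have TX: "T ` X \<subseteq> X" using surjT by simp
  obtain K where K: "\<forall>n. \<exists>p\<in>P. n \<le> p \<and> p < n + K" using assms(2) bounded_gaps_def by auto
  have Punb: "\<exists>p\<in>P. n \<le> p" for n using K by blast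
  show ?thesis unfolding partial_shadowing_def
  proof (intro allI impI)
    fix \<epsilon> :: real assume \<epsilon>pos: "\<epsilon> > 0"
    define e where "e = min \<epsilon> (1/2)"
    define \<eta> where "\<eta> = e / 4"
    have e: "0 < e" "e \<le> \<epsilon>" "e \<le> 1/2" using \<epsilon>pos unfolding e_def by auto
    have \<eta>: "0 < \<eta>" "\<eta> \<le> 1/8" "\<eta> \<le> \<epsilon>" "2 * \<eta> \<le> \<epsilon>" using e unfolding \<eta>_def by auto
    obtain N0 M where specP: "\<forall>(r::nat) (x::nat \<Rightarrow> 'a) (a::nat \<Rightarrow> nat) (b::nat \<Rightarrow> nat) (n::nat).
        r \<ge> 1 \<and> (\<forall>i<r. x i \<in> X) \<and> (\<forall>i<r. a i < b i)
        \<and> (\<forall>i. Suc i < r \<longrightarrow> b i < a (Suc i) \<and> a (Suc i) - b i \<ge> M)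
        \<and> n \<in> P \<and> n \<ge> N0 \<and> real n \<ge> (1 + \<eta>) * real (b (r - 1))
        \<longrightarrow> (\<exists>y\<in>X. (T ^^ n) y = y \<and>
              (\<forall>i<r. real (card {m. a i \<le> m \<and> m < b i \<and>
                                    dist ((T ^^ m) (x i)) ((T ^^ m) y) < \<eta>})
                     > (1 - \<eta>) * real (b i - a i)))"
      using assms(3)[unfolded partial_specification_def, rule_format, OF \<eta>(1)] by blast
    define M' where "M' = M + 1"
    define L where "L = nat \<lceil>real M' / \<eta>\<rceil> + 1"
    have L1: "L \<ge> 1" unfolding L_def by simp
    have "real M' / \<eta> \<le> real L" unfolding L_def by linarith
    then have LM: "\<eta> * real L \<ge> real M'" using \<eta>(1) by (simp add: field_simps)
    define N1 where "N1 = nat \<lceil>8 * real L / e\<rceil>"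
    have N1: "real N1 \<ge> 8 * real L / e" unfolding N1_def by linarith
    have "8 * real L / e \<ge> real L" using e L1 by (simp add: field_simps)
    then have LN1: "L \<le> N1" using N1 by linarith
    obtain \<delta>c where \<delta>c: "\<delta>c > 0" "\<forall>z k. k \<le> N1 \<longrightarrow> (\<forall>j\<le>k. z j \<in> X) \<longrightarrow>
     (\<forall>j<k. dist (T (z j)) (z (Suc j)) < \<delta>c) \<longrightarrow> dist ((T ^^ k) (z 0)) (z k) < \<eta>"
      using chain[OF uc TX \<eta>(1), of N1] by blast
    define \<delta> where "\<delta> = min \<delta>c (min (\<eta> / real L) (1 / (real N1 + 1)))"
    have \<delta>: "\<delta> > 0" "\<delta> \<le> \<delta>c" using \<delta>c \<eta> L1 unfolding \<delta>_def by auto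
    have \<delta>L: "\<delta> * real L \<le> \<eta>"
    proof -
      have "\<delta> \<le> \<eta> / real L" unfolding \<delta>_def by simp
      then show ?thesis using L1 by (simp add: field_simps)
    qed
    have \<delta>N: "\<delta> * real N1 < 1"
    proof -
      have "\<delta> \<le> 1 / (real N1 + 1)" unfolding \<delta>_def by simp
      then have "\<delta> * (real N1 + 1) \<le> 1" by (simp add: field_simps)
      then show ?thesis using \<delta> by (simp add: algebra_simps)
    qed
    show "\<exists>\<delta>>0. \<forall>N x. 1 \<le> N \<and> (\<forall>n\<in>{1..N}. x n \<in> X) \<and> partial_pseudo_orbit T \<delta> x N \<longrightarrow>
                (\<exists>y\<in>X. partially_traced T \<epsilon> x N y)"
    proof (intro exI[of _ \<delta>] conjI allI impI)
      show "\<delta> > 0" using \<delta> by simp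
      fix N and x :: "nat \<Rightarrow> 'a"
      assume H: "1 \<le> N \<and> (\<forall>n\<in>{1..N}. x n \<in> X) \<and> partial_pseudo_orbit T \<delta> x N"
      have N1': "1 \<le> N" and xX: "\<And>n. 1 \<le> n \<Longrightarrow> n \<le> N \<Longrightarrow> x n \<in> X"
        and ppo: "partial_pseudo_orbit T \<delta> x N" using H by auto
      define Good where "Good = {n. 1 \<le> n \<and> n \<le> N - 1 \<and> dist (T (x n)) (x (Suc n)) < \<delta>}"
      define Bs where "Bs = {n. 1 \<le> n \<and> n \<le> N - 1 \<and> \<not> dist (T (x n)) (x (Suc n)) < \<delta>}"
      have GBu: "Good \<union> Bs = {1..N-1}" and GBi: "Good \<inter> Bs = {}" unfolding Good_def Bs_def by auto
      have finGB: "finite Good" "finite Bs" unfolding Good_def Bs_def by auto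
      have cardGB: "card Good + card Bs = N - 1"
        using card_Un_disjoint[OF finGB GBi] GBu by simp
      have ppo2: "N \<ge> 2 \<Longrightarrow> real (card Good) > (1 - \<delta>) * real (N - 1)"
        using ppo unfolding partial_pseudo_orbit_def Good_def by auto
      define Tr where "Tr = (\<lambda>y. {n. 1 \<le> n \<and> n \<le> N \<and> dist (x n) ((T ^^ n) y) < \<epsilon>})"
      have finTr: "finite (Tr y)" for y unfolding Tr_def by auto
      have trac: "partially_traced T \<epsilon> x N y = (real (card (Tr y)) > (1 - \<epsilon>) * real N)" for y
        unfolding partially_traced_def Tr_def by simp
      show "\<exists>y\<in>X. partially_traced T \<epsilon> x N y"
      proof (cases "N \<le> N1")
        case True
        have allgood: "dist (T (x k)) (x (Suc k)) < \<delta>" if "1 \<le> k" "k \<le> N - 1" for k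
        proof -
          have N2: "N \<ge> 2" using that by auto
          have "\<delta> * real (N - 1) \<le> \<delta> * real N1" using True \<delta> by (intro mult_left_mono) auto
          then have "real (card Good) > real (N - 1) - 1" using ppo2[OF N2] \<delta>N
            by (simp add: algebra_simps)
          then have "card Good \<ge> N - 1" by linarith
          moreover have "Good \<subseteq> {1..N-1}" unfolding Good_def by auto
          moreover have "card Good \<le> card {1..N-1}" using \<open>Good \<subseteq> {1..N-1}\<close> by (intro card_mono) auto
          ultimately have "card Good = card {1..N-1}" by simp
          then have "Good = {1..N-1}" using card_subset_eq[of "{1..N-1}" Good] \<open>Good \<subseteq> {1..N-1}\<close> by simp
          then have "k \<in> Good" using that by simp
          then show ?thesis unfolding Good_def by simp
        qed
        obtain y0 where y0: "y0 \<in> X" "T y0 = x 1" using surjT xX[of 1] N1' by (metis imageE order_refl)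
        have "Tr y0 = {1..N}"
        proof (intro subset_antisym subsetI)
          fix n assume "n \<in> Tr y0" then show "n \<in> {1..N}" unfolding Tr_def by auto
        next
          fix n assume n: "n \<in> {1..N}"
          have eq: "(T ^^ n) y0 = (T ^^ (n - 1)) (x 1)"
          proof -
            have "n = Suc (n - 1)" using n by auto
            then have "(T ^^ n) y0 = (T ^^ (n - 1)) (T y0)" by (metis funpow_Suc_right o_apply)
            then show ?thesis using y0 by simp
          qed
          have a1: "n - 1 \<le> N1" using n True by auto
          have a2: "\<forall>j\<le>n - 1. x (1 + j) \<in> X" using n xX by auto
          have a3: "\<forall>j<n - 1. dist (T (x (1 + j))) (x (Suc (1 + j))) < \<delta>c"
          proof (intro allI impI)
            fix j assume "j < n - 1"
            then have "dist (T (x (1 + j))) (x (Suc (1 + j))) < \<delta>" using n by (intro allgood) auto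
            then show "dist (T (x (1 + j))) (x (Suc (1 + j))) < \<delta>c" using \<delta> by simp
          qed
          have "dist ((T ^^ (n - 1)) (x (1 + 0))) (x (1 + (n - 1))) < \<eta>"
            using \<delta>c(2)[THEN spec[where x="\<lambda>j. x (1 + j)"], THEN spec[where x="n - 1"]] a1 a2 a3 by simp
          then have "dist ((T ^^ n) y0) (x n) < \<eta>" using eq n by simp
          then show "n \<in> Tr y0" using n \<eta> unfolding Tr_def by (simp add: dist_commute)
        qed
        then have "real (card (Tr y0)) = real N" by simp
        moreover have "(1 - \<epsilon>) * real N < real N" using \<epsilon>pos N1' by simp
        ultimately show ?thesis using y0 trac by auto
      next
        case False
        then have NgtN1: "N1 < N" by simp
        have eN: "e * real N > 8 * real L"
        proof -
          have "real N > 8 * real L / e" using N1 NgtN1 by (meson less_le_trans not_le of_nat_less_iff)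
          then show ?thesis using e by (simp add: field_simps)
        qed
        define B where "B = L + M'"
        have "\<eta> * real L \<le> 1 * real L" using \<eta> by (intro mult_right_mono) auto
        then have "real M' \<le> real L" using LM by simp
        then have MleL: "M' \<le> L" by simp
        have M1: "M' \<ge> 1" unfolding M'_def by simp
        have "e * real N \<le> (1/2) * real N" using e by (intro mult_right_mono) auto
        then have "real N \<ge> 2 * real L" using eN L1 by simp
        then have NB: "B \<le> N" unfolding B_def using MleL by simp
        have Bpos: "B > 0" unfolding B_def using L1 by simp
        have N2: "N \<ge> 2" using NB L1 M1 unfolding B_def by simp
        define J where "J = N div B"
        have JB: "J * B \<le> N" unfolding J_def by (simp add: div_times_less_eq_dividend)
        have NJ: "N < (J + 1) * B"
        proof -
          have "N = J * B + N mod B" unfolding J_def by simp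
          moreover have "N mod B < B" using Bpos by simp
          ultimately show ?thesis by (simp add: algebra_simps)
        qed
        have J1: "J \<ge> 1" unfolding J_def using div_le_mono[OF NB, of B] Bpos by simp
        define s where "s = (\<lambda>i. 1 + i * B)"
        have sL: "s i + L \<le> N" if "i < J" for i
        proof -
          have "s i + L \<le> (i + 1) * B" unfolding s_def B_def using M1 by (simp add: algebra_simps)
          also have "\<dots> \<le> J * B" using that by (intro mult_le_mono1) simp
          finally show ?thesis using JB by simp
        qed
        have "\<forall>i. \<exists>z. i < J \<longrightarrow> z \<in> X \<and> (T ^^ (s i)) z = x (s i)"
        proof
          fix i
          show "\<exists>z. i < J \<longrightarrow> z \<in> X \<and> (T ^^ (s i)) z = x (s i)"
          proof (cases "i < J")
            case True
            have "x (s i) \<in> X" using xX sL[OF True] unfolding s_def by simp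
            then obtain z where "z \<in> X" "(T ^^ (s i)) z = x (s i)" using funpow_pre[OF surjT] by blast
            then show ?thesis by blast
          qed simp
        qed
        then obtain xs where xs: "\<And>i. i < J \<Longrightarrow> xs i \<in> X \<and> (T ^^ (s i)) (xs i) = x (s i)"
          by metis
        obtain n where n: "n \<in> P" "N0 + 2 * (s (J - 1) + L) \<le> n" using Punb by blast
        have conj: "1 \<le> J \<and> (\<forall>i<J. xs i \<in> X) \<and> (\<forall>i<J. s i < (\<lambda>i. s i + L) i)
          \<and> (\<forall>i. Suc i < J \<longrightarrow> (\<lambda>i. s i + L) i < s (Suc i) \<and> s (Suc i) - (\<lambda>i. s i + L) i \<ge> M)
          \<and> n \<in> P \<and> n \<ge> N0 \<and> real n \<ge> (1 + \<eta>) * real ((\<lambda>i. s i + L) (J - 1))"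
        proof (intro conjI)
          show "1 \<le> J" by (rule J1)
          show "\<forall>i<J. xs i \<in> X" using xs by blast
          show "\<forall>i<J. s i < (\<lambda>i. s i + L) i" using L1 by simp
          show "\<forall>i. Suc i < J \<longrightarrow> (\<lambda>i. s i + L) i < s (Suc i) \<and> s (Suc i) - (\<lambda>i. s i + L) i \<ge> M"
            unfolding s_def B_def M'_def by simp
          show "n \<in> P" by (rule n(1))
          show "n \<ge> N0" using n(2) by simp
          have "(1 + \<eta>) * real (s (J - 1) + L) \<le> 2 * real (s (J - 1) + L)"
            using \<eta> by (intro mult_right_mono) auto
          also have "\<dots> \<le> real n" using n(2) by linarith
          finally show "real n \<ge> (1 + \<eta>) * real ((\<lambda>i. s i + L) (J - 1))" by simp
        qed
        note inst = specP[THEN spec[where x=J], THEN spec[where x=xs], THEN spec[where x=s],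
            THEN spec[where x="\<lambda>i. s i + L"], THEN spec[where x=n]]
        have "\<exists>y\<in>X. (T ^^ n) y = y \<and> (\<forall>i<J. real (card {m. s i \<le> m \<and> m < s i + L \<and>
              dist ((T ^^ m) (xs i)) ((T ^^ m) y) < \<eta>}) > (1 - \<eta>) * real L)"
          using mp[OF inst conj] by simp
        then obtain y where y: "y \<in> X" and ycard: "\<And>i. i < J \<Longrightarrow> real (card {m. s i \<le> m \<and> m < s i + L \<and>
              dist ((T ^^ m) (xs i)) ((T ^^ m) y) < \<eta>}) > (1 - \<eta>) * real L" by blast
        define A where "A = (\<lambda>i. {m. s i \<le> m \<and> m < s i + L \<and> dist ((T ^^ m) (xs i)) ((T ^^ m) y) < \<eta>})"
        have Acard: "\<And>i. i < J \<Longrightarrow> real (card (A i)) > (1 - \<eta>) * real L" using ycard unfolding A_def .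
        define G where "G = {i. i < J \<and> (\<forall>j<L - 1. dist (T (x (s i + j))) (x (Suc (s i + j))) < \<delta>)}"
        have finGG: "finite G" unfolding G_def by simp
        have finA: "finite (A i)" for i unfolding A_def by simp
        have Adiv: "(m - 1) div B = i" if "m \<in> A i" for m i
        proof -
          have "m - 1 = i * B + (m - s i)" "m - s i < B" using that unfolding A_def s_def B_def by auto
          then show ?thesis using Bpos by simp
        qed
        have AsubTr: "A i \<subseteq> Tr y" if iG: "i \<in> G" for i
        proof
          fix m assume mA: "m \<in> A i"
          have iJ: "i < J" using iG unfolding G_def by simp
          define k where "k = m - s i"
          have mk: "m = s i + k" "k < L" and dm: "dist ((T ^^ m) (xs i)) ((T ^^ m) y) < \<eta>"
            using mA unfolding A_def k_def by auto
          have "(T ^^ m) (xs i) = (T ^^ (k + s i)) (xs i)" using mk by (simp add: add.commute)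
          also have "\<dots> = (T ^^ k) ((T ^^ s i) (xs i))" by (simp add: funpow_add)
          also have "\<dots> = (T ^^ k) (x (s i))" using xs[OF iJ] by simp
          finally have orb: "(T ^^ m) (xs i) = (T ^^ k) (x (s i))" .
          have a1: "k \<le> N1" using mk LN1 by simp
          have a2: "\<forall>j\<le>k. x (s i + j) \<in> X"
          proof (intro allI impI)
            fix j assume "j \<le> k"
            then show "x (s i + j) \<in> X" using xX sL[OF iJ] mk unfolding s_def by simp
          qed
          have a3: "\<forall>j<k. dist (T (x (s i + j))) (x (Suc (s i + j))) < \<delta>c"
          proof (intro allI impI)
            fix j assume "j < k"
            then have "j < L - 1" using mk by simp
            then have "dist (T (x (s i + j))) (x (Suc (s i + j))) < \<delta>" using iG unfolding G_def by blast
            then show "dist (T (x (s i + j))) (x (Suc (s i + j))) < \<delta>c" using \<delta> by simp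
          qed
          have "dist ((T ^^ k) (x (s i + 0))) (x (s i + k)) < \<eta>"
            using \<delta>c(2)[THEN spec[where x="\<lambda>j. x (s i + j)"], THEN spec[where x=k]] a1 a2 a3 by simp
          then have d1: "dist (x m) ((T ^^ m) (xs i)) < \<eta>" using orb mk by (simp add: dist_commute)
          have "dist (x m) ((T ^^ m) y) \<le> dist (x m) ((T ^^ m) (xs i)) + dist ((T ^^ m) (xs i)) ((T ^^ m) y)"
            by (rule dist_triangle)
          then have "dist (x m) ((T ^^ m) y) < \<epsilon>" using d1 dm \<eta> by linarith
          moreover have "1 \<le> m" "m \<le> N" using mk sL[OF iJ] unfolding s_def by auto
          ultimately show "m \<in> Tr y" unfolding Tr_def by simp
        qed
        have disj: "\<forall>i\<in>G. \<forall>i'\<in>G. i \<noteq> i' \<longrightarrow> A i \<inter> A i' = {}" using Adiv by blast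
        have "card (\<Union>i\<in>G. A i) = (\<Sum>i\<in>G. card (A i))"
          using card_UN_disjoint[OF finGG] finA disj by blast
        moreover have "card (\<Union>i\<in>G. A i) \<le> card (Tr y)"
          using AsubTr finTr by (intro card_mono) auto
        ultimately have "real (card (Tr y)) \<ge> (\<Sum>i\<in>G. real (card (A i)))"
          by (metis of_nat_le_iff of_nat_sum)
        moreover have "(\<Sum>i\<in>G. real (card (A i))) \<ge> (\<Sum>i\<in>G. (1 - \<eta>) * real L)"
          using Acard unfolding G_def by (intro sum_mono) (auto intro: less_imp_le)
        ultimately have C: "real (card (Tr y)) \<ge> real (card G) * ((1 - \<eta>) * real L)" by simp
        have badsub: "{..<J} - G \<subseteq> (\<lambda>k. (k - 1) div B) ` Bs"
        proof
          fix i assume i: "i \<in> {..<J} - G"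
          then have iJ: "i < J" by simp
          from i obtain j where j: "j < L - 1" "\<not> dist (T (x (s i + j))) (x (Suc (s i + j))) < \<delta>"
            unfolding G_def by auto
          have "s i + j \<in> Bs" using j sL[OF iJ] unfolding Bs_def s_def by auto
          moreover have "(s i + j - 1) div B = i"
          proof -
            have "s i + j - 1 = i * B + j" "j < B" using j unfolding s_def B_def by auto
            then show ?thesis using Bpos by simp
          qed
          ultimately show "i \<in> (\<lambda>k. (k - 1) div B) ` Bs" by force
        qed
        have "card ({..<J} - G) \<le> card Bs"
          using card_mono[OF _ badsub] card_image_le[OF finGB(2)] finGB by (meson finite_imageI le_trans)
        moreover have "card ({..<J} - G) = J - card G" using finGG by (subst card_Diff_subset) (auto simp: G_def)
        moreover have "card G \<le> J" using card_mono[of "{..<J}" G] unfolding G_def by auto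
        ultimately have cG: "real (card G) \<ge> real J - real (card Bs)" by linarith
        have cB: "real (card Bs) \<le> \<delta> * real N"
        proof -
          have "real (card Bs) = real (N - 1) - real (card Good)" using cardGB by simp
          also have "\<dots> < \<delta> * real (N - 1)" using ppo2[OF N2] by (simp add: algebra_simps)
          also have "\<dots> \<le> \<delta> * real N" using \<delta> by (intro mult_left_mono) auto
          finally show ?thesis by simp
        qed
        have "real (card (Tr y)) > (1 - e) * real N"
        proof (rule arith_final[OF C cG cB \<delta>L _ LM eN])
          show "real N < (real J + 1) * (real L + real M')" using NJ unfolding B_def
            by (metis of_nat_1 of_nat_add of_nat_less_iff of_nat_mult)
          show "\<eta> = e / 4" unfolding \<eta>_def ..
          show "real N \<ge> real L + real M'" using NB unfolding B_def by simp
        qed (use e L1 \<delta> in auto)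
        moreover have "(1 - \<epsilon>) * real N \<le> (1 - e) * real N" using e by (intro mult_right_mono) auto
        ultimately have "real (card (Tr y)) > (1 - \<epsilon>) * real N" by linarith
        then show ?thesis using y trac by blast
      qed
    qed
  qed
qed

end
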